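(* Let $k\ge1$, let $\alpha_1,\dots,\alpha_k>-1$ and $\beta_1,\dots,\beta_k$ be real, and put $\gamma_j=\alpha_{j+1}+\alpha_{j+2}+\dots+\alpha_k+\beta_j+\beta_{j+1}+\dots+\beta_k+(k-j)$ for $j=1,\dots,k$; assume $\gamma_j>0$ for all $j$. Let $(x_1,\dots,x_k)$ have the joint density $$f_1(x_1,\dots,x_k)=C_1\,x_1^{\alpha_1}(1-x_1)^{\beta_1}x_2^{\alpha_2}(1-x_1-x_2)^{\beta_2}\cdots x_k^{\alpha_k}(1-x_1-\dots-x_k)^{\beta_k-1}$$ on $\{x_j>0,\ 0<x_1+\dots+x_j<1,\ j=1,\dots,k\}$ and $0$ elsewhere, where $C_1$ is the normalizing constant. Let $(v_1,\dots,v_k)$ be a vector of positive real random variables with an arbitrary joint density $f(v_1,\dots,v_k)$ on $(0,\infty)^k$, independent of $(x_1,\dots,x_k)$. Let $$u_j=v_j\,\frac{x_j}{1-x_1-\dots-x_{j-1}},\quad j=1,\dots,k$$ (for $j=1$ the denominator is $1$), and let $g(u_1,\dots,u_k)$ be the joint density of $(u_1,\dots,u_k)$. Then, for (almost every) $(u_1,\dots,u_k)\in(0,\infty)^k$, $$\Big\{\prod_{j=1}^k\frac{\Gamma(\alpha_j+1)}{\Gamma(\alpha_j+\gamma_j+1)}\Big\}g(u_1,\dots,u_k)=K_{u_j,j=1,\dots,k}^{(\alpha_j,\gamma_j),j=1,\dots,k}f(u_1,\dots,u_k).$$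
   Context: The multivariable Kober fractional integral operator of the second kind is defined, for parameters $\zeta_j$ and $\alpha_j>0$, by $$K_{u_j,j=1,\dots,k}^{(\zeta_j,\alpha_j),j=1,\dots,k}f(u_1,\dots,u_k)=\Big\{\prod_{j=1}^k\frac{u_j^{\zeta_j}}{\Gamma(\alpha_j)}\Big\}\int_{v_1>u_1}\cdots\int_{v_k>u_k}\Big\{\prod_{j=1}^k(v_j-u_j)^{\alpha_j-1}v_j^{-\zeta_j-\alpha_j}\Big\}f(v_1,\dots,v_k)\,dv_1\cdots dv_k;$$ here it is applied with $\zeta_j=\alpha_j$ and $\alpha_j$ replaced by $\gamma_j$. *)

theory Defs
  imports "HOL-Analysis.Analysis"
begin

text \<open>Vectors (x_1,...,x_k) are functions nat => real restricted to the index set {1..k};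
  the k-dimensional Lebesgue measure is the product measure below.\<close>

abbreviation lebk :: "nat \<Rightarrow> (nat \<Rightarrow> real) measure" where
  "lebk k \<equiv> PiM {1..k} (\<lambda>_. lborel)"

definition gam :: "nat \<Rightarrow> (nat \<Rightarrow> real) \<Rightarrow> (nat \<Rightarrow> real) \<Rightarrow> nat \<Rightarrow> real" where
  "gam k \<alpha> \<beta> j = (\<Sum>i\<in>{j+1..k}. \<alpha> i) + (\<Sum>i\<in>{j..k}. \<beta> i) + real (k - j)"

definition simplex_region :: "nat \<Rightarrow> (nat \<Rightarrow> real) set" where
  "simplex_region k = {x. \<forall>j\<in>{1..k}. x j > 0 \<and> 0 < (\<Sum>i\<in>{1..j}. x i) \<and> (\<Sum>i\<in>{1..j}. x i) < 1}"

definition f1_unnorm :: "nat \<Rightarrow> (nat \<Rightarrow> real) \<Rightarrow> (nat \<Rightarrow> real) \<Rightarrow> (nat \<Rightarrow> real) \<Rightarrow> real" where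
  "f1_unnorm k \<alpha> \<beta> x =
     (if x \<in> simplex_region k then
        (\<Prod>j\<in>{1..k}. x j powr \<alpha> j *
            (1 - (\<Sum>i\<in>{1..j}. x i)) powr (if j = k then \<beta> j - 1 else \<beta> j))
      else 0)"

definition C1 :: "nat \<Rightarrow> (nat \<Rightarrow> real) \<Rightarrow> (nat \<Rightarrow> real) \<Rightarrow> real" where
  "C1 k \<alpha> \<beta> = 1 / (\<integral>x. f1_unnorm k \<alpha> \<beta> x \<partial>lebk k)"

definition f1_dens :: "nat \<Rightarrow> (nat \<Rightarrow> real) \<Rightarrow> (nat \<Rightarrow> real) \<Rightarrow> (nat \<Rightarrow> real) \<Rightarrow> real" where
  "f1_dens k \<alpha> \<beta> x = C1 k \<alpha> \<beta> * f1_unnorm k \<alpha> \<beta> x"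

definition u_map :: "nat \<Rightarrow> (nat \<Rightarrow> real) \<times> (nat \<Rightarrow> real) \<Rightarrow> (nat \<Rightarrow> real)" where
  "u_map k xv = (\<lambda>j\<in>{1..k}. snd xv j * fst xv j / (1 - (\<Sum>i\<in>{1..<j}. fst xv i)))"

definition kober2 :: "nat \<Rightarrow> (nat \<Rightarrow> real) \<Rightarrow> (nat \<Rightarrow> real) \<Rightarrow> ((nat \<Rightarrow> real) \<Rightarrow> real)
                      \<Rightarrow> (nat \<Rightarrow> real) \<Rightarrow> real" where
  "kober2 k \<zeta> a f u =
     (\<Prod>j\<in>{1..k}. u j powr \<zeta> j / Gamma (a j)) *
     (\<integral>v. indicator {v. \<forall>j\<in>{1..k}. v j > u j} v *
          (\<Prod>j\<in>{1..k}. (v j - u j) powr (a j - 1) * v j powr (- \<zeta> j - a j)) * f v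
        \<partial>lebk k)"

definition pos_orthant :: "nat \<Rightarrow> (nat \<Rightarrow> real) set" where
  "pos_orthant k = {v. \<forall>j\<in>{1..k}. v j > 0}"

end

theory Submission imports Defs begin

lemma comp_meas: "j \<in> {1..n} \<Longrightarrow> (\<lambda>x. x j) \<in> borel_measurable (lebk n)"
  by (simp add: measurable_component_singleton)

lemma psum_meas[measurable]: "j \<le> Suc n \<Longrightarrow> (\<lambda>x. \<Sum>i\<in>{1..<j}. x i) \<in> borel_measurable (lebk n)"
  by (intro borel_measurable_sum comp_meas) auto

lemma psum_meas'[measurable]: "j \<le> n \<Longrightarrow> (\<lambda>x. \<Sum>i\<in>{1..j}. x i) \<in> borel_measurable (lebk n)"
  by (intro borel_measurable_sum comp_meas) auto

lemma region_pred[measurable]: "Measurable.pred (lebk n) (\<lambda>x. x \<in> simplex_region n)"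
  unfolding simplex_region_def mem_Collect_eq
  apply (intro pred_intros_finite pred_intros_logic)
  apply simp
  apply measurable
  done

lemma u_map_meas[measurable]: "(\<lambda>x. u_map n (x, v)) \<in> measurable (lebk n) (lebk n)"
  unfolding u_map_def fst_conv snd_conv
  apply (intro measurable_restrict)
  apply (simp only: measurable_lborel1)
  apply (intro borel_measurable_divide borel_measurable_times borel_measurable_const comp_meas borel_measurable_diff psum_meas)
  by auto

definition Fgen :: "nat \<Rightarrow> (nat\<Rightarrow>real) \<Rightarrow> (nat\<Rightarrow>real) \<Rightarrow> (nat\<Rightarrow>real) \<Rightarrow> real" where
  "Fgen n a e x = (if x \<in> simplex_region n then (\<Prod>j\<in>{1..n}. x j powr a j * (1 - (\<Sum>i\<in>{1..j}. x i)) powr e j) else 0)"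

definition ExP :: "nat \<Rightarrow> (nat\<Rightarrow>real) \<Rightarrow> (nat\<Rightarrow>real) \<Rightarrow> nat \<Rightarrow> real" where
  "ExP n a e j = (\<Sum>i\<in>{j+1..n}. a i) + (\<Sum>i\<in>{j..n}. e i) + real (n - j)"

definition Gd :: "(nat\<Rightarrow>real) \<Rightarrow> (nat\<Rightarrow>real) \<Rightarrow> real \<Rightarrow> nat \<Rightarrow> real \<Rightarrow> real" where
  "Gd v a E j r = (if 0 < r \<and> r < v j then (r / v j) powr a j * (1 - r / v j) powr E / v j else 0)"

lemma Gd_meas: "Gd v a E j \<in> borel_measurable borel"
  unfolding Gd_def by measurable

lemma Gd_nonneg: "Gd v a E j r \<ge> 0"
  unfolding Gd_def by auto

lemma Fgen_nonneg: "Fgen n a e x \<ge> 0"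
  unfolding Fgen_def by (auto intro!: prod_nonneg)

lemma Fgen_meas[measurable]: "(\<lambda>x. Fgen n a e x) \<in> borel_measurable (lebk n)"
  unfolding Fgen_def
  apply (rule measurable_If)
  apply (intro borel_measurable_prod borel_measurable_times powr_real_measurable psum_meas' comp_meas borel_measurable_diff borel_measurable_const)
  apply auto [4]
  using region_pred[of n] unfolding pred_def by simp

lemma um_upd: "u_map (Suc m) (x'(Suc m := t), v) = (u_map m (x', v))(Suc m := v (Suc m) * t / (1 - (\<Sum>i\<in>{1..m}. x' i)))"
proof (rule ext)
  fix j
  show "u_map (Suc m) (x'(Suc m := t), v) j = ((u_map m (x', v))(Suc m := v (Suc m) * t / (1 - (\<Sum>i\<in>{1..m}. x' i)))) j"
  proof (cases "j = Suc m")
    case True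
    have "(\<Sum>i\<in>{1..<Suc m}. (x'(Suc m := t)) i) = (\<Sum>i\<in>{1..m}. x' i)"
      by (intro sum.cong) auto
    then show ?thesis using True by (simp add: u_map_def)
  next
    case False
    have "(\<Sum>i\<in>{1..<j}. (x'(Suc m := t)) i) = (\<Sum>i\<in>{1..<j}. x' i)" if "j \<le> m"
      using that by (intro sum.cong) auto
    then show ?thesis using False by (auto simp add: u_map_def)
  qed
qed

lemma region_upd:
  "x'(Suc m := t) \<in> simplex_region (Suc m) \<longleftrightarrow>
     x' \<in> simplex_region m \<and> 0 < t \<and> (\<Sum>i\<in>{1..m}. x' i) + t < 1"
proof -
  have s1: "(\<Sum>i\<in>{1..j}. (x'(Suc m := t)) i) = (\<Sum>i\<in>{1..j}. x' i)" if "j \<le> m" for j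
    using that by (intro sum.cong) auto
  have s2: "(\<Sum>i\<in>{1..Suc m}. (x'(Suc m := t)) i) = (\<Sum>i\<in>{1..m}. x' i) + t"
    by (simp add: s1)
  have nn: "(\<Sum>i\<in>{1..m}. x' i) \<ge> 0" if "x' \<in> simplex_region m"
    using that unfolding simplex_region_def by (intro sum_nonneg) (auto simp: less_imp_le)
  show ?thesis
  proof
    assume A: "x'(Suc m := t) \<in> simplex_region (Suc m)"
    have R: "x' \<in> simplex_region m" unfolding simplex_region_def
    proof safe
      fix j assume j: "j \<in> {1..m}"
      then have "j \<in> {1..Suc m}" by auto
      with A have "(x'(Suc m := t)) j > 0 \<and> 0 < (\<Sum>i\<in>{1..j}. (x'(Suc m := t)) i) \<and> (\<Sum>i\<in>{1..j}. (x'(Suc m := t)) i) < 1"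
        unfolding simplex_region_def by blast
      then show "x' j > 0" "0 < (\<Sum>i\<in>{1..j}. x' i)" "(\<Sum>i\<in>{1..j}. x' i) < 1"
        using j s1[of j] by auto
    qed
    have "Suc m \<in> {1..Suc m}" by auto
    with A have "(x'(Suc m := t)) (Suc m) > 0 \<and> (\<Sum>i\<in>{1..Suc m}. (x'(Suc m := t)) i) < 1"
      unfolding simplex_region_def by blast
    then show "x' \<in> simplex_region m \<and> 0 < t \<and> (\<Sum>i\<in>{1..m}. x' i) + t < 1"
      using R s2 by auto
  next
    assume B: "x' \<in> simplex_region m \<and> 0 < t \<and> (\<Sum>i\<in>{1..m}. x' i) + t < 1"
    show "x'(Suc m := t) \<in> simplex_region (Suc m)" unfolding simplex_region_def
    proof safe
      fix j assume j: "j \<in> {1..Suc m}"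
      show "(x'(Suc m := t)) j > 0" "0 < (\<Sum>i\<in>{1..j}. (x'(Suc m := t)) i)" "(\<Sum>i\<in>{1..j}. (x'(Suc m := t)) i) < 1"
      proof -
        consider "j = Suc m" | "j \<in> {1..m}" using j by fastforce
        then have "(x'(Suc m := t)) j > 0 \<and> 0 < (\<Sum>i\<in>{1..j}. (x'(Suc m := t)) i) \<and> (\<Sum>i\<in>{1..j}. (x'(Suc m := t)) i) < 1"
        proof cases
          case 1 then show ?thesis using B s2 nn[of] by auto
        next
          case 2 then show ?thesis using B s1[of j] unfolding simplex_region_def by auto
        qed
        then show "(x'(Suc m := t)) j > 0" "0 < (\<Sum>i\<in>{1..j}. (x'(Suc m := t)) i)" "(\<Sum>i\<in>{1..j}. (x'(Suc m := t)) i) < 1"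
          by auto
      qed
    qed
  qed
qed

lemma Fgen_upd:
  "Fgen (Suc m) a e (x'(Suc m := t)) = Fgen m a e x' *
     (if 0 < t \<and> (\<Sum>i\<in>{1..m}. x' i) + t < 1 then t powr a (Suc m) * (1 - (\<Sum>i\<in>{1..m}. x' i) - t) powr e (Suc m) else 0)"
proof -
  have s1: "(\<Sum>i\<in>{1..j}. (x'(Suc m := t)) i) = (\<Sum>i\<in>{1..j}. x' i)" if "j \<le> m" for j
    using that by (intro sum.cong) auto
  have s2: "(\<Sum>i\<in>{1..Suc m}. (x'(Suc m := t)) i) = (\<Sum>i\<in>{1..m}. x' i) + t"
    by (simp add: s1)
  have p: "(\<Prod>j\<in>{1..m}. (x'(Suc m := t)) j powr a j * (1 - (\<Sum>i\<in>{1..j}. (x'(Suc m := t)) i)) powr e j)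
      = (\<Prod>j\<in>{1..m}. x' j powr a j * (1 - (\<Sum>i\<in>{1..j}. x' i)) powr e j)"
    by (intro prod.cong) (auto simp: s1)
  have "(\<Prod>j\<in>{1..Suc m}. (x'(Suc m := t)) j powr a j * (1 - (\<Sum>i\<in>{1..j}. (x'(Suc m := t)) i)) powr e j)
     = (t powr a (Suc m) * (1 - (\<Sum>i\<in>{1..m}. x' i) - t) powr e (Suc m)) *
       (\<Prod>j\<in>{1..m}. x' j powr a j * (1 - (\<Sum>i\<in>{1..j}. x' i)) powr e j)"
    by (subst prod.nat_ivl_Suc') (auto simp: p s2 diff_diff_eq)
  then show ?thesis unfolding Fgen_def region_upd by auto
qed

lemma Fgen_e':
  "Fgen m a (e(m := e m + c)) x' = Fgen m a e x' * (1 - (\<Sum>i\<in>{1..m}. x' i)) powr c"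
proof (cases m)
  case 0
  then show ?thesis by (simp add: Fgen_def)
next
  case (Suc k)
  have p: "(\<Prod>j\<in>{1..k}. x' j powr a j * (1 - (\<Sum>i\<in>{1..j}. x' i)) powr (e(Suc k := e (Suc k) + c)) j)
      = (\<Prod>j\<in>{1..k}. x' j powr a j * (1 - (\<Sum>i\<in>{1..j}. x' i)) powr e j)"
    by (intro prod.cong) auto
  have "(\<Prod>j\<in>{1..Suc k}. x' j powr a j * (1 - (\<Sum>i\<in>{1..j}. x' i)) powr (e(Suc k := e (Suc k) + c)) j)
     = (\<Prod>j\<in>{1..Suc k}. x' j powr a j * (1 - (\<Sum>i\<in>{1..j}. x' i)) powr e j) * (1 - (\<Sum>i\<in>{1..Suc k}. x' i)) powr c"
    apply (subst (1 2) prod.nat_ivl_Suc')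
    by (auto simp: p powr_add)
  then show ?thesis unfolding Fgen_def Suc by auto
qed

lemma Ex_step:
  assumes "j \<in> {1..m}"
  shows "ExP m a (e(m := e m + (a (Suc m) + e (Suc m) + 1))) j = ExP (Suc m) a e j"
proof -
  have "(\<Sum>i\<in>{j..m}. (e(m := e m + (a (Suc m) + e (Suc m) + 1))) i)
        = (\<Sum>i\<in>{j..m}. e i + (if i = m then a (Suc m) + e (Suc m) + 1 else 0))"
    by (intro sum.cong) auto
  also have "\<dots> = (\<Sum>i\<in>{j..m}. e i) + (a (Suc m) + e (Suc m) + 1)"
    using assms by (simp add: sum.distrib)
  finally have A: "(\<Sum>i\<in>{j..m}. (e(m := e m + (a (Suc m) + e (Suc m) + 1))) i) = (\<Sum>i\<in>{j..m}. e i) + (a (Suc m) + e (Suc m) + 1)" .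
  have B: "(\<Sum>i\<in>{j+1..Suc m}. a i) = (\<Sum>i\<in>{j+1..m}. a i) + a (Suc m)"
    using assms by (subst sum.nat_ivl_Suc') auto
  have C: "(\<Sum>i\<in>{j..Suc m}. e i) = (\<Sum>i\<in>{j..m}. e i) + e (Suc m)"
    using assms by (subst sum.nat_ivl_Suc') auto
  have D: "real (Suc m - j) = real (m - j) + 1" using assms by auto
  show ?thesis unfolding ExP_def A B C D by simp
qed

lemma Ex_last: "ExP n a e n = e n"
  unfolding ExP_def by simp

lemma inner1:
  fixes g :: "real \<Rightarrow> ennreal"
  assumes s: "0 \<le> s" "s < 1" and vn: "vn > 0" and g[measurable]: "g \<in> borel_measurable borel"
  shows "(\<integral>\<^sup>+t. g (vn * t / (1 - s)) * ennreal (if 0 < t \<and> s + t < 1 then t powr p * (1 - s - t) powr q else 0) \<partial>lborel)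
     = ennreal ((1 - s) powr (p + q + 1)) *
       (\<integral>\<^sup>+r. g r * ennreal (if 0 < r \<and> r < vn then (r / vn) powr p * (1 - r / vn) powr q / vn else 0) \<partial>lborel)"
proof -
  define c where "c = (1 - s) / vn"
  have c: "c > 0" using s vn by (simp add: c_def)
  have "(\<integral>\<^sup>+t. g (vn * t / (1 - s)) * ennreal (if 0 < t \<and> s + t < 1 then t powr p * (1 - s - t) powr q else 0) \<partial>lborel)
     = ennreal \<bar>c\<bar> * (\<integral>\<^sup>+r. g (vn * (0 + c * r) / (1 - s)) * ennreal (if 0 < 0 + c * r \<and> s + (0 + c * r) < 1 then (0 + c * r) powr p * (1 - s - (0 + c * r)) powr q else 0) \<partial>lborel)"
    by (rule nn_integral_real_affine) (use c in auto)
  also have "\<dots> = (\<integral>\<^sup>+r. ennreal ((1 - s) powr (p + q + 1)) * (g r * ennreal (if 0 < r \<and> r < vn then (r / vn) powr p * (1 - r / vn) powr q / vn else 0)) \<partial>lborel)"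
  proof -
   have pw: "ennreal \<bar>c\<bar> * (g (vn * (0 + c * r) / (1 - s)) * ennreal (if 0 < 0 + c * r \<and> s + (0 + c * r) < 1 then (0 + c * r) powr p * (1 - s - (0 + c * r)) powr q else 0))
        = ennreal ((1 - s) powr (p + q + 1)) * (g r * ennreal (if 0 < r \<and> r < vn then (r / vn) powr p * (1 - r / vn) powr q / vn else 0))" for r
   proof -
    have e1: "vn * (0 + c * r) / (1 - s) = r" using s vn by (simp add: c_def)
    have e2: "(0 < 0 + c * r \<and> s + (0 + c * r) < 1) \<longleftrightarrow> (0 < r \<and> r < vn)"
    proof -
      have a1: "0 < c*r \<longleftrightarrow> 0 < r" using c by (simp add: zero_less_mult_iff)
      have cr: "c * r = (1 - s) * (r / vn)" by (simp add: c_def)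
      have "s + c*r < 1 \<longleftrightarrow> (1 - s) * (r / vn) < (1 - s) * 1" unfolding cr by auto
      also have "\<dots> \<longleftrightarrow> r / vn < 1" using s by (intro mult_less_cancel_left_pos) auto
      also have "\<dots> \<longleftrightarrow> r < vn" using vn by simp
      finally show ?thesis using a1 by simp
    qed
    have e3: "\<bar>c\<bar> * ((c * r) powr p * (1 - s - c * r) powr q) = (1 - s) powr (p + q + 1) * ((r / vn) powr p * (1 - r / vn) powr q / vn)"
      if "0 < r" "r < vn"
    proof -
      have q1: "c * r = (1 - s) * (r / vn)" by (simp add: c_def)
      have q2: "1 - s - c * r = (1 - s) * (1 - r / vn)" using vn by (simp add: c_def field_simps)
      have P1: "(c * r) powr p * (1 - s - c * r) powr q = ((1 - s) powr p * (r / vn) powr p) * ((1 - s) powr q * (1 - r / vn) powr q)"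
      proof -
        have "((1 - s) * (r / vn)) powr p = (1 - s) powr p * (r / vn) powr p"
          by (rule powr_mult; use s vn that in auto)
        moreover have "((1 - s) * (1 - r / vn)) powr q = (1 - s) powr q * (1 - r / vn) powr q"
          by (rule powr_mult; use s vn that in auto)
        ultimately show ?thesis by (subst q2, subst q1, simp only:)
      qed
      have P2: "(1 - s) powr (p + q + 1) = (1 - s) powr p * (1 - s) powr q * (1 - s)"
        using s by (simp add: powr_add)
      have P3: "\<bar>c\<bar> = (1 - s) / vn" using c s vn by (simp add: c_def)
      show ?thesis unfolding P1 P2 P3 using vn by (simp add: field_simps)
    qed
    have "ennreal \<bar>c\<bar> * (g (vn * (0 + c * r) / (1 - s)) * ennreal (if 0 < 0 + c * r \<and> s + (0 + c * r) < 1 then (0 + c * r) powr p * (1 - s - (0 + c * r)) powr q else 0))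
        = g r * ennreal (\<bar>c\<bar> * (if 0 < r \<and> r < vn then (c * r) powr p * (1 - s - c * r) powr q else 0))"
      unfolding e1 e2 by (simp add: ennreal_mult' mult_ac)
    also have "\<dots> = g r * ennreal ((1 - s) powr (p + q + 1) * (if 0 < r \<and> r < vn then (r / vn) powr p * (1 - r / vn) powr q / vn else 0))"
      using e3 by auto
    also have "\<dots> = ennreal ((1 - s) powr (p + q + 1)) * (g r * ennreal (if 0 < r \<and> r < vn then (r / vn) powr p * (1 - r / vn) powr q / vn else 0))"
      using vn by (simp add: ennreal_mult' mult_ac)
    finally show "ennreal \<bar>c\<bar> * (g (vn * (0 + c * r) / (1 - s)) * ennreal (if 0 < 0 + c * r \<and> s + (0 + c * r) < 1 then (0 + c * r) powr p * (1 - s - (0 + c * r)) powr q else 0))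
        = ennreal ((1 - s) powr (p + q + 1)) * (g r * ennreal (if 0 < r \<and> r < vn then (r / vn) powr p * (1 - r / vn) powr q / vn else 0))" .
  qed
   show ?thesis
     apply (subst nn_integral_cmult[symmetric])
     apply measurable
     apply (rule nn_integral_cong)
     apply (rule pw)
     done
  qed
  also have "\<dots> = ennreal ((1 - s) powr (p + q + 1)) *
       (\<integral>\<^sup>+r. g r * ennreal (if 0 < r \<and> r < vn then (r / vn) powr p * (1 - r / vn) powr q / vn else 0) \<partial>lborel)"
    by (rule nn_integral_cmult) measurable
  finally show ?thesis .
qed

lemma u_map_space: "u_map m (x, v) \<in> space (lebk m)"
  by (simp add: u_map_def space_PiM)

lemma lemA:
  assumes "\<forall>j\<in>{1..n}. v j > 0" and "h \<in> borel_measurable (lebk n)"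
  shows "(\<integral>\<^sup>+x. h (u_map n (x, v)) * ennreal (Fgen n a e x) \<partial>lebk n)
       = (\<integral>\<^sup>+u. h u * ennreal (\<Prod>j\<in>{1..n}. Gd v a (ExP n a e j) j (u j)) \<partial>lebk n)"
  using assms
proof (induction n arbitrary: e h)
  case 0
  then show ?case
    by (simp add: PiM_empty Fgen_def simplex_region_def u_map_def nn_integral_count_space_finite)
next
  case (Suc m)
  interpret product_sigma_finite "\<lambda>_::nat. lborel::real measure" by standard
  note hmeas[measurable] = Suc.prems(2)
  have I: "{1..Suc m} = insert (Suc m) {1..m}" by auto
  have L: "lebk (Suc m) = PiM (insert (Suc m) {1..m}) (\<lambda>_. lborel)" by (simp only: I)
  have vpos: "\<forall>j\<in>{1..m}. v j > 0" using Suc.prems(1) by auto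
  have vn: "v (Suc m) > 0" using Suc.prems(1) by auto
  define c where "c = a (Suc m) + e (Suc m) + 1"
  define e' where "e' = e(m := e m + c)"
  define G where "G = (\<lambda>r. Gd v a (e (Suc m)) (Suc m) r)"
  define hh where "hh = (\<lambda>w. \<integral>\<^sup>+r. h (w(Suc m := r)) * ennreal (G r) \<partial>lborel)"
  have hmeas': "h \<in> borel_measurable (PiM (insert (Suc m) {1..m}) (\<lambda>_. lborel))"
    using hmeas L by simp
  have Gmeas[measurable]: "G \<in> borel_measurable borel"
    unfolding G_def Gd_def by measurable
  have hhmeas: "hh \<in> borel_measurable (lebk m)"
    unfolding hh_def
    by (rule lborel.borel_measurable_nn_integral) (use hmeas' in measurable)
  have step1: "(\<integral>\<^sup>+x. h (u_map (Suc m) (x, v)) * ennreal (Fgen (Suc m) a e x) \<partial>lebk (Suc m))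
     = (\<integral>\<^sup>+x'. \<integral>\<^sup>+t. h (u_map (Suc m) (x'(Suc m := t), v)) * ennreal (Fgen (Suc m) a e (x'(Suc m := t))) \<partial>lborel \<partial>lebk m)"
  proof -
    have M1: "(\<lambda>x. h (u_map (Suc m) (x, v)) * ennreal (Fgen (Suc m) a e x)) \<in> borel_measurable (lebk (Suc m))"
      by measurable
    show ?thesis unfolding L
      by (rule product_nn_integral_insert) (use M1 L in auto)
  qed
  have step2: "(\<integral>\<^sup>+t. h (u_map (Suc m) (x'(Suc m := t), v)) * ennreal (Fgen (Suc m) a e (x'(Suc m := t))) \<partial>lborel)
     = hh (u_map m (x', v)) * ennreal (Fgen m a e' x')" if x': "x' \<in> space (lebk m)" for x'
  proof -
    define s where "s = (\<Sum>i\<in>{1..m}. x' i)"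
    define w where "w = u_map m (x', v)"
    define F where "F = Fgen m a e x'"
    have F0: "F \<ge> 0" unfolding F_def by (rule Fgen_nonneg)
    have gmeas: "(\<lambda>r. h (w(Suc m := r))) \<in> borel_measurable borel"
      using measurable_compose[OF measurable_component_update[OF u_map_space[of m x' v], of "Suc m"] hmeas']
      by (simp add: w_def)
    have Fe': "Fgen m a e' x' = F * (1 - s) powr c"
      unfolding e'_def F_def s_def by (rule Fgen_e')
    have LHS: "(\<integral>\<^sup>+t. h (u_map (Suc m) (x'(Suc m := t), v)) * ennreal (Fgen (Suc m) a e (x'(Suc m := t))) \<partial>lborel)
      = (\<integral>\<^sup>+t. h (w(Suc m := v (Suc m) * t / (1 - s))) * ennreal (F * (if 0 < t \<and> s + t < 1 then t powr a (Suc m) * (1 - s - t) powr e (Suc m) else 0)) \<partial>lborel)"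
      unfolding um_upd Fgen_upd w_def s_def F_def ..
    show ?thesis
    proof (cases "F = 0")
      case True
      then show ?thesis unfolding LHS Fe' by simp
    next
      case False
      then have R: "x' \<in> simplex_region m" unfolding F_def Fgen_def by (auto split: if_splits)
      have s0: "0 \<le> s" using R unfolding s_def simplex_region_def by (intro sum_nonneg) (auto simp: less_imp_le)
      have s1: "s < 1"
      proof (cases m)
        case 0 then show ?thesis by (simp add: s_def)
      next
        case (Suc k)
        then have "m \<in> {1..m}" by auto
        then show ?thesis using R unfolding s_def simplex_region_def by blast
      qed
      have "(\<integral>\<^sup>+t. h (w(Suc m := v (Suc m) * t / (1 - s))) * ennreal (F * (if 0 < t \<and> s + t < 1 then t powr a (Suc m) * (1 - s - t) powr e (Suc m) else 0)) \<partial>lborel)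
        = (\<integral>\<^sup>+t. ennreal F * (h (w(Suc m := v (Suc m) * t / (1 - s))) * ennreal (if 0 < t \<and> s + t < 1 then t powr a (Suc m) * (1 - s - t) powr e (Suc m) else 0)) \<partial>lborel)"
        using F0 by (intro nn_integral_cong) (simp add: ennreal_mult mult_ac)
      also have "\<dots> = ennreal F * (\<integral>\<^sup>+t. h (w(Suc m := v (Suc m) * t / (1 - s))) * ennreal (if 0 < t \<and> s + t < 1 then t powr a (Suc m) * (1 - s - t) powr e (Suc m) else 0) \<partial>lborel)"
        by (rule nn_integral_cmult) (use gmeas s1 in measurable)
      also have "\<dots> = ennreal F * (ennreal ((1 - s) powr (a (Suc m) + e (Suc m) + 1)) * hh w)"
        unfolding hh_def G_def Gd_def
        by (subst inner1[OF s0 s1 vn gmeas]) simp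
      also have "\<dots> = hh w * ennreal (Fgen m a e' x')"
        unfolding Fe' c_def using F0 by (simp add: ennreal_mult mult_ac)
      finally show ?thesis unfolding LHS w_def .
    qed
  qed
  have RHS: "(\<integral>\<^sup>+u. h u * ennreal (\<Prod>j\<in>{1..Suc m}. Gd v a (ExP (Suc m) a e j) j (u j)) \<partial>lebk (Suc m))
     = (\<integral>\<^sup>+u'. \<integral>\<^sup>+r. h (u'(Suc m := r)) * ennreal (\<Prod>j\<in>{1..Suc m}. Gd v a (ExP (Suc m) a e j) j ((u'(Suc m := r)) j)) \<partial>lborel \<partial>lebk m)"
  proof -
    have M1: "(\<lambda>u. h u * ennreal (\<Prod>j\<in>{1..Suc m}. Gd v a (ExP (Suc m) a e j) j (u j))) \<in> borel_measurable (lebk (Suc m))"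
      apply (intro borel_measurable_times_ennreal hmeas measurable_compose[OF _ measurable_ennreal] borel_measurable_prod)
      apply (rule measurable_compose[OF comp_meas Gd_meas])
      apply auto
      done
    show ?thesis unfolding L
      by (rule product_nn_integral_insert) (use M1 L in auto)
  qed
  have step3: "hh u' * ennreal (\<Prod>j\<in>{1..m}. Gd v a (ExP m a e' j) j (u' j))
     = (\<integral>\<^sup>+r. h (u'(Suc m := r)) * ennreal (\<Prod>j\<in>{1..Suc m}. Gd v a (ExP (Suc m) a e j) j ((u'(Suc m := r)) j)) \<partial>lborel)"
    if u': "u' \<in> space (lebk m)" for u'
  proof -
    have gmeas: "(\<lambda>r. h (u'(Suc m := r))) \<in> borel_measurable borel"
      using measurable_compose[OF measurable_component_update[OF u', of "Suc m"] hmeas']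
      by simp
    have P: "(\<Prod>j\<in>{1..Suc m}. Gd v a (ExP (Suc m) a e j) j ((u'(Suc m := r)) j))
        = G r * (\<Prod>j\<in>{1..m}. Gd v a (ExP m a e' j) j (u' j))" for r
    proof -
      have "(\<Prod>j\<in>{1..m}. Gd v a (ExP (Suc m) a e j) j ((u'(Suc m := r)) j)) = (\<Prod>j\<in>{1..m}. Gd v a (ExP m a e' j) j (u' j))"
        by (intro prod.cong) (auto simp: e'_def c_def Ex_step)
      then show ?thesis by (subst prod.nat_ivl_Suc') (auto simp: G_def Ex_last)
    qed
    have "hh u' * ennreal (\<Prod>j\<in>{1..m}. Gd v a (ExP m a e' j) j (u' j))
      = (\<integral>\<^sup>+r. h (u'(Suc m := r)) * ennreal (G r) * ennreal (\<Prod>j\<in>{1..m}. Gd v a (ExP m a e' j) j (u' j)) \<partial>lborel)"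
      unfolding hh_def by (rule nn_integral_multc[symmetric]) (use gmeas in measurable)
    also have "\<dots> = (\<integral>\<^sup>+r. h (u'(Suc m := r)) * ennreal (\<Prod>j\<in>{1..Suc m}. Gd v a (ExP (Suc m) a e j) j ((u'(Suc m := r)) j)) \<partial>lborel)"
      unfolding P by (intro nn_integral_cong) (simp add: ennreal_mult Gd_nonneg G_def prod_nonneg mult_ac)
    finally show ?thesis .
  qed
  have "(\<integral>\<^sup>+x. h (u_map (Suc m) (x, v)) * ennreal (Fgen (Suc m) a e x) \<partial>lebk (Suc m))
      = (\<integral>\<^sup>+x'. hh (u_map m (x', v)) * ennreal (Fgen m a e' x') \<partial>lebk m)"
    unfolding step1 by (intro nn_integral_cong step2)
  also have "\<dots> = (\<integral>\<^sup>+u'. hh u' * ennreal (\<Prod>j\<in>{1..m}. Gd v a (ExP m a e' j) j (u' j)) \<partial>lebk m)"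
    by (rule Suc.IH[OF vpos hhmeas])
  also have "\<dots> = (\<integral>\<^sup>+u'. \<integral>\<^sup>+r. h (u'(Suc m := r)) * ennreal (\<Prod>j\<in>{1..Suc m}. Gd v a (ExP (Suc m) a e j) j ((u'(Suc m := r)) j)) \<partial>lborel \<partial>lebk m)"
    by (intro nn_integral_cong step3)
  also have "\<dots> = (\<integral>\<^sup>+u. h u * ennreal (\<Prod>j\<in>{1..Suc m}. Gd v a (ExP (Suc m) a e j) j (u j)) \<partial>lebk (Suc m))"
    by (rule RHS[symmetric])
  finally show ?case .
qed

lemma Gd_kober:
  assumes u: "r > 0"
  shows "Gd v a (g - 1) j r = (if r < v j then r powr a j * ((v j - r) powr (g - 1) * v j powr (- a j - g)) else 0)"
proof (cases "r < v j")
  case True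
  have v: "v j > 0" using u True by simp
  have q1: "1 - r / v j = (v j - r) / v j" using v by (simp add: field_simps)
  have q2: "v j powr (- a j - g) = inverse (v j powr a j * v j powr (g - 1) * v j)"
  proof -
    have "- a j - g = - (a j + (g - 1) + 1)" by simp
    then show ?thesis using v by (simp only: powr_minus powr_add powr_one)
  qed
  show ?thesis using True u v unfolding Gd_def q1 q2 powr_divide by (simp add: field_simps)
qed (simp add: Gd_def)

lemma Q_kober:
  assumes "u \<in> pos_orthant k"
  shows "(\<Prod>j\<in>{1..k}. Gd v a (g j - 1) j (u j)) =
    (\<Prod>j\<in>{1..k}. u j powr a j) * (indicator {v. \<forall>j\<in>{1..k}. v j > u j} v *
       (\<Prod>j\<in>{1..k}. (v j - u j) powr (g j - 1) * v j powr (- a j - g j)))"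
proof -
  have pos: "\<And>j. j \<in> {1..k} \<Longrightarrow> u j > 0" using assms by (simp add: pos_orthant_def)
  have "(\<Prod>j\<in>{1..k}. Gd v a (g j - 1) j (u j)) = (\<Prod>j\<in>{1..k}. (if u j < v j then u j powr a j * ((v j - u j) powr (g j - 1) * v j powr (- a j - g j)) else 0))"
    by (intro prod.cong refl Gd_kober pos)
  also have "\<dots> = (\<Prod>j\<in>{1..k}. u j powr a j) * (indicator {v. \<forall>j\<in>{1..k}. v j > u j} v *
       (\<Prod>j\<in>{1..k}. (v j - u j) powr (g j - 1) * v j powr (- a j - g j)))"
  proof (cases "\<forall>j\<in>{1..k}. v j > u j")
    case True
    then show ?thesis by (simp add: prod.distrib)
  next
    case False
    then obtain j where "j \<in> {1..k}" "\<not> u j < v j" by auto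
    then have Z: "(\<Prod>j\<in>{1..k}. (if u j < v j then u j powr a j * ((v j - u j) powr (g j - 1) * v j powr (- a j - g j)) else 0)) = 0"
      by (intro prod_zero) (auto intro!: bexI[of _ j])
    have I0: "indicator {v. \<forall>j\<in>{1..k}. v j > u j} v = (0::real)" using False by simp
    show ?thesis unfolding Z I0 by simp
  qed
  finally show ?thesis .
qed

lemma nn_Beta:
  fixes a b :: real assumes "a > 0" "b > 0"
  shows "(\<integral>\<^sup>+r. ennreal (indicator {0<..<1} r * (r powr (a - 1) * (1 - r) powr (b - 1))) \<partial>lborel) = ennreal (Beta a b)"
proof -
  have "((\<lambda>t. t powr (a - 1) * (1 - t) powr (b - 1)) has_integral Beta a b) {0<..<1}"
    using has_integral_Beta_real[OF assms] by (simp add: has_integral_Icc_iff_Ioo)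
  from nn_integral_has_integral_lebesgue[OF _ this] show ?thesis by simp
qed

lemma Beta_pos: "a > 0 \<Longrightarrow> b > 0 \<Longrightarrow> Beta a b > (0::real)"
  unfolding Beta_def by simp

definition eK :: "nat \<Rightarrow> (nat \<Rightarrow> real) \<Rightarrow> nat \<Rightarrow> real" where
  "eK k \<beta> = (\<lambda>j. if j = k then \<beta> j - 1 else \<beta> j)"

lemma f1_Fgen: "f1_unnorm k \<alpha> \<beta> = Fgen k \<alpha> (eK k \<beta>)"
  by (rule ext) (simp add: f1_unnorm_def Fgen_def eK_def)

lemma ExP_gam: "j \<in> {1..k} \<Longrightarrow> ExP k \<alpha> (eK k \<beta>) j = gam k \<alpha> \<beta> j - 1"
proof -
  assume j: "j \<in> {1..k}"
  have "(\<Sum>i\<in>{j..k}. eK k \<beta> i) = (\<Sum>i\<in>{j..k}. \<beta> i - (if i = k then 1 else 0))"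
    by (intro sum.cong) (auto simp: eK_def)
  also have "\<dots> = (\<Sum>i\<in>{j..k}. \<beta> i) - 1" using j by (simp add: sum_subtractf)
  finally show ?thesis unfolding ExP_def gam_def by simp
qed

lemma norm_const:
  assumes "\<forall>j\<in>{1..k}. \<alpha> j > -1" and "\<forall>j\<in>{1..k}. gam k \<alpha> \<beta> j > 0"
  shows "(\<integral>\<^sup>+x. ennreal (f1_unnorm k \<alpha> \<beta> x) \<partial>lebk k) = ennreal (\<Prod>j\<in>{1..k}. Beta (\<alpha> j + 1) (gam k \<alpha> \<beta> j))"
proof -
  interpret product_sigma_finite "\<lambda>_::nat. lborel::real measure" by standard
  have "(\<integral>\<^sup>+x. ennreal (f1_unnorm k \<alpha> \<beta> x) \<partial>lebk k) = (\<integral>\<^sup>+x. (\<lambda>_. 1) (u_map k (x, \<lambda>_. 1)) * ennreal (Fgen k \<alpha> (eK k \<beta>) x) \<partial>lebk k)"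
    by (simp add: f1_Fgen)
  also have "\<dots> = (\<integral>\<^sup>+u. (\<lambda>_. 1) u * ennreal (\<Prod>j\<in>{1..k}. Gd (\<lambda>_. 1) \<alpha> (ExP k \<alpha> (eK k \<beta>) j) j (u j)) \<partial>lebk k)"
    by (rule lemA) auto
  also have "\<dots> = (\<integral>\<^sup>+u. (\<Prod>j\<in>{1..k}. ennreal (Gd (\<lambda>_. 1) \<alpha> (gam k \<alpha> \<beta> j - 1) j (u j))) \<partial>lebk k)"
    by (intro nn_integral_cong) (simp add: prod_ennreal Gd_nonneg ExP_gam)
  also have "\<dots> = (\<Prod>j\<in>{1..k}. (\<integral>\<^sup>+r. ennreal (Gd (\<lambda>_. 1) \<alpha> (gam k \<alpha> \<beta> j - 1) j r) \<partial>lborel))"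
    by (rule product_nn_integral_prod) (auto intro!: measurable_compose[OF Gd_meas measurable_ennreal])
  also have "\<dots> = (\<Prod>j\<in>{1..k}. ennreal (Beta (\<alpha> j + 1) (gam k \<alpha> \<beta> j)))"
  proof (intro prod.cong refl)
    fix j assume j: "j \<in> {1..k}"
    have "(\<integral>\<^sup>+r. ennreal (Gd (\<lambda>_. 1) \<alpha> (gam k \<alpha> \<beta> j - 1) j r) \<partial>lborel)
       = (\<integral>\<^sup>+r. ennreal (indicator {0<..<1} r * (r powr ((\<alpha> j + 1) - 1) * (1 - r) powr (gam k \<alpha> \<beta> j - 1))) \<partial>lborel)"
      by (intro nn_integral_cong) (simp add: Gd_def indicator_def)
    also have "\<dots> = ennreal (Beta (\<alpha> j + 1) (gam k \<alpha> \<beta> j))"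
      using assms j by (intro nn_Beta) force+
    finally show "(\<integral>\<^sup>+r. ennreal (Gd (\<lambda>_. 1) \<alpha> (gam k \<alpha> \<beta> j - 1) j r) \<partial>lborel) = ennreal (Beta (\<alpha> j + 1) (gam k \<alpha> \<beta> j))" .
  qed
  also have "\<dots> = ennreal (\<Prod>j\<in>{1..k}. Beta (\<alpha> j + 1) (gam k \<alpha> \<beta> j))"
  proof (rule prod_ennreal)
    fix j assume "j \<in> {1..k}"
    then have "\<alpha> j + 1 > 0" "gam k \<alpha> \<beta> j > 0" using assms by force+
    then show "Beta (\<alpha> j + 1) (gam k \<alpha> \<beta> j) \<ge> 0" by (simp add: Beta_pos less_imp_le)
  qed
  finally show ?thesis .
qed

lemma comp_pred: "j \<in> {1..n} \<Longrightarrow> Measurable.pred borel P \<Longrightarrow> Measurable.pred (lebk n) (\<lambda>x. P (x j))"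
  by (rule measurable_compose[OF comp_meas[of j n]])

lemma comp_fun: "j \<in> {1..n} \<Longrightarrow> (f::real\<Rightarrow>real) \<in> borel_measurable borel \<Longrightarrow> (\<lambda>x. f (x j)) \<in> borel_measurable (lebk n)"
  by (rule measurable_compose[OF comp_meas[of j n]])

lemma Kmeas: "(\<lambda>v. indicator {v. \<forall>j\<in>{1..k}. v j > u j} v * (\<Prod>j\<in>{1..k}. (v j - u j) powr (g j - 1) * v j powr (- a j - g j)) * f v)
   \<in> borel_measurable (lebk k)" if fm: "f \<in> borel_measurable (lebk k)"
proof -
  have P: "Measurable.pred (lebk k) (\<lambda>v. \<forall>j\<in>{1..k}. u j < v j)"
    by (intro pred_intros_finite) (auto intro!: comp_pred)
  have I: "(\<lambda>v. indicator {v. \<forall>j\<in>{1..k}. v j > u j} v :: real) = (\<lambda>v. if \<forall>j\<in>{1..k}. u j < v j then 1 else 0)"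
    by (auto simp: indicator_def)
  show ?thesis unfolding I
    apply (intro borel_measurable_times borel_measurable_prod fm)
     apply (rule measurable_If) using P apply (auto simp: pred_def)[3]
    apply (rule comp_fun) apply auto
    done
qed

lemma u_map_meas2: "u_map k \<in> measurable (lebk k \<Otimes>\<^sub>M lebk k) (lebk k)"
proof -
  have c: "(\<lambda>p. fst p j) \<in> borel_measurable (lebk k \<Otimes>\<^sub>M lebk k)" "(\<lambda>p. snd p j) \<in> borel_measurable (lebk k \<Otimes>\<^sub>M lebk k)"
    if "j \<in> {1..k}" for j
    using measurable_compose[OF measurable_fst comp_meas[OF that]] measurable_compose[OF measurable_snd comp_meas[OF that]]
    by (auto simp: comp_def)
  show ?thesis
    unfolding u_map_def
    apply (intro measurable_restrict)
    apply (simp only: measurable_lborel1)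
    apply (intro borel_measurable_divide borel_measurable_times borel_measurable_diff borel_measurable_const borel_measurable_sum c)
    by auto
qed

lemma Qmeas: "(\<lambda>p. \<Prod>j\<in>{1..k}. Gd (snd p) a (E j) j (fst p j)) \<in> borel_measurable (lebk k \<Otimes>\<^sub>M lebk k)"
proof (intro borel_measurable_prod)
  fix j assume j: "j \<in> {1..k}"
  have c[measurable]: "(\<lambda>p. fst p j) \<in> borel_measurable (lebk k \<Otimes>\<^sub>M lebk k)" "(\<lambda>p. snd p j) \<in> borel_measurable (lebk k \<Otimes>\<^sub>M lebk k)"
    using measurable_compose[OF measurable_fst comp_meas[OF j]] measurable_compose[OF measurable_snd comp_meas[OF j]]
    by (auto simp: comp_def)
  show "(\<lambda>p. Gd (snd p) a (E j) j (fst p j)) \<in> borel_measurable (lebk k \<Otimes>\<^sub>M lebk k)"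
    unfolding Gd_def by measurable
qed

theorem theorem1p3:
  fixes k :: nat and \<alpha> \<beta> :: "nat \<Rightarrow> real"
    and f g :: "(nat \<Rightarrow> real) \<Rightarrow> real"
  assumes "k \<ge> 1"
    and "\<forall>j\<in>{1..k}. \<alpha> j > -1"
    and "\<forall>j\<in>{1..k}. gam k \<alpha> \<beta> j > 0"
    and f_meas: "f \<in> borel_measurable (lebk k)"
    and f_nonneg: "\<forall>v. f v \<ge> 0"
    and f_supp: "\<forall>v. v \<notin> pos_orthant k \<longrightarrow> f v = 0"
    and f_prob: "(\<integral>\<^sup>+ v. ennreal (f v) \<partial>lebk k) = 1"
    and g_meas: "g \<in> borel_measurable (lebk k)"
    and g_nonneg: "\<forall>u. g u \<ge> 0"
    and g_dens: "distr (density (lebk k \<Otimes>\<^sub>M lebk k)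
                          (\<lambda>(x, v). ennreal (f1_dens k \<alpha> \<beta> x * f v)))
                       (lebk k) (u_map k)
                 = density (lebk k) (\<lambda>u. ennreal (g u))"
  shows "AE u in lebk k. u \<in> pos_orthant k \<longrightarrow>
           (\<Prod>j\<in>{1..k}. Gamma (\<alpha> j + 1) / Gamma (\<alpha> j + gam k \<alpha> \<beta> j + 1)) * g u
             = kober2 k \<alpha> (gam k \<alpha> \<beta>) f u"
proof -
  note f_meas[measurable]
  define \<gamma> where "\<gamma> = gam k \<alpha> \<beta>"
  define B where "B = (\<Prod>j\<in>{1..k}. Beta (\<alpha> j + 1) (\<gamma> j))"
  have Bj: "Beta (\<alpha> j + 1) (\<gamma> j) > 0" if "j \<in> {1..k}" for j
    using assms(2,3) that unfolding \<gamma>_def by (intro Beta_pos) force+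
  have Bpos: "B > 0" unfolding B_def using Bj by (intro prod_pos) auto
  have f1meas[measurable]: "f1_unnorm k \<alpha> \<beta> \<in> borel_measurable (lebk k)"
    unfolding f1_Fgen by (rule Fgen_meas)
  have f1nn: "f1_unnorm k \<alpha> \<beta> x \<ge> 0" for x
    unfolding f1_Fgen by (rule Fgen_nonneg)
  have intf1: "(\<integral>x. f1_unnorm k \<alpha> \<beta> x \<partial>lebk k) = B"
  proof -
    have "(\<integral>x. f1_unnorm k \<alpha> \<beta> x \<partial>lebk k) = enn2real (\<integral>\<^sup>+x. ennreal (f1_unnorm k \<alpha> \<beta> x) \<partial>lebk k)"
      by (rule integral_eq_nn_integral[OF f1meas]) (simp add: f1nn)
    also have "\<dots> = enn2real (ennreal B)" by (simp only: norm_const[OF assms(2,3)] B_def \<gamma>_def)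
    also have "\<dots> = B" using Bpos by simp
    finally show ?thesis .
  qed
  define C where "C = C1 k \<alpha> \<beta>"
  have Ceq: "C = 1 / B" unfolding C_def C1_def intf1 ..
  have Cpos: "C > 0" using Bpos Ceq by simp
  define Q where "Q = (\<lambda>u v. \<Prod>j\<in>{1..k}. Gd v \<alpha> (\<gamma> j - 1) j (u j))"
  have Qv: "(\<lambda>u. Q u v) \<in> borel_measurable (lebk k)" for v
    unfolding Q_def by (intro borel_measurable_prod measurable_compose[OF comp_meas Gd_meas]) auto
  have Qnn: "Q u v \<ge> 0" for u v unfolding Q_def by (intro prod_nonneg) (simp add: Gd_nonneg)
  define H where "H = (\<lambda>u. \<integral>\<^sup>+v. ennreal (C * f v * Q u v) \<partial>lebk k)"
  interpret P: finite_product_sigma_finite "\<lambda>_::nat. lborel::real measure" "{1..k}" by standard auto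
  interpret PP: pair_sigma_finite "lebk k" "lebk k"
    by (intro pair_sigma_finite.intro) (rule P.sigma_finite_measure_axioms)+
  have Qm[measurable]: "(\<lambda>p. Q (fst p) (snd p)) \<in> borel_measurable (lebk k \<Otimes>\<^sub>M lebk k)"
    unfolding Q_def by (rule Qmeas)
  have Jm[measurable]: "(\<lambda>(u, v). ennreal (C * f v * Q u v)) \<in> borel_measurable (lebk k \<Otimes>\<^sub>M lebk k)"
  proof -
    have "(\<lambda>p. ennreal (C * f (snd p) * Q (fst p) (snd p))) \<in> borel_measurable (lebk k \<Otimes>\<^sub>M lebk k)"
      by (intro measurable_compose[OF _ measurable_ennreal] borel_measurable_times borel_measurable_const Qm
          measurable_compose[OF measurable_snd f_meas])
    then show ?thesis by (simp add: split_beta')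
  qed
  have Hmeas[measurable]: "H \<in> borel_measurable (lebk k)"
    unfolding H_def by (rule P.borel_measurable_nn_integral) (rule Jm)
  note u_map_meas2[measurable]
  have dens: "distr (density (lebk k \<Otimes>\<^sub>M lebk k) (\<lambda>(x, v). ennreal (f1_dens k \<alpha> \<beta> x * f v))) (lebk k) (u_map k)
      = density (lebk k) H"
  proof (rule measure_eqI)
    show "sets (distr (density (lebk k \<Otimes>\<^sub>M lebk k) (\<lambda>(x, v). ennreal (f1_dens k \<alpha> \<beta> x * f v))) (lebk k) (u_map k))
      = sets (density (lebk k) H)" by simp
    fix A assume "A \<in> sets (distr (density (lebk k \<Otimes>\<^sub>M lebk k) (\<lambda>(x, v). ennreal (f1_dens k \<alpha> \<beta> x * f v))) (lebk k) (u_map k))"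
    then have A[measurable]: "A \<in> sets (lebk k)" by simp
    have Dm[measurable]: "(\<lambda>(x, v). ennreal (f1_dens k \<alpha> \<beta> x * f v)) \<in> borel_measurable (lebk k \<Otimes>\<^sub>M lebk k)"
    proof -
      have "(\<lambda>p. ennreal (f1_dens k \<alpha> \<beta> (fst p) * f (snd p))) \<in> borel_measurable (lebk k \<Otimes>\<^sub>M lebk k)"
        unfolding f1_dens_def
        by (intro measurable_compose[OF _ measurable_ennreal] borel_measurable_times borel_measurable_const
          measurable_compose[OF measurable_snd f_meas] measurable_compose[OF measurable_fst f1meas])
      then show ?thesis by (simp add: split_beta')
    qed
    define F where "F = (\<lambda>p. ennreal (C * f1_unnorm k \<alpha> \<beta> (fst p) * f (snd p)) * indicator A (u_map k p))"
    have Fm: "F \<in> borel_measurable (lebk k \<Otimes>\<^sub>M lebk k)"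
    proof -
      have "(\<lambda>p. ennreal (C * f1_unnorm k \<alpha> \<beta> (fst p) * f (snd p))) \<in> borel_measurable (lebk k \<Otimes>\<^sub>M lebk k)"
        by (intro measurable_compose[OF _ measurable_ennreal] borel_measurable_times borel_measurable_const
          measurable_compose[OF measurable_snd f_meas] measurable_compose[OF measurable_fst f1meas])
      moreover have "(\<lambda>p. indicator A (u_map k p) :: ennreal) \<in> borel_measurable (lebk k \<Otimes>\<^sub>M lebk k)"
        by (intro measurable_compose[OF u_map_meas2] borel_measurable_indicator A)
      ultimately show ?thesis unfolding F_def by (rule borel_measurable_times_ennreal)
    qed
    have inner: "(\<integral>\<^sup>+x. ennreal (C * f1_unnorm k \<alpha> \<beta> x * f v) * indicator A (u_map k (x, v)) \<partial>lebk k)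
       = (\<integral>\<^sup>+u. ennreal (C * f v * Q u v) * indicator A u \<partial>lebk k)" for v
    proof (cases "v \<in> pos_orthant k")
      case False
      then show ?thesis using f_supp by simp
    next
      case True
      then have vpos: "\<forall>j\<in>{1..k}. v j > 0" by (simp add: pos_orthant_def)
      have Cf: "C * f v \<ge> 0" using Cpos f_nonneg by simp
      have hm: "(indicator A :: _ \<Rightarrow> ennreal) \<in> borel_measurable (lebk k)" by (rule borel_measurable_indicator[OF A])
      have "(\<integral>\<^sup>+x. ennreal (C * f1_unnorm k \<alpha> \<beta> x * f v) * indicator A (u_map k (x, v)) \<partial>lebk k)
         = (\<integral>\<^sup>+x. ennreal (C * f v) * (indicator A (u_map k (x, v)) * ennreal (Fgen k \<alpha> (eK k \<beta>) x)) \<partial>lebk k)"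
      proof (intro nn_integral_cong)
        fix x
        have "ennreal (C * f1_unnorm k \<alpha> \<beta> x * f v) = ennreal (C * f v) * ennreal (Fgen k \<alpha> (eK k \<beta>) x)"
          unfolding f1_Fgen[symmetric] using Cf f1nn by (simp add: ennreal_mult[symmetric] mult_ac)
        then show "ennreal (C * f1_unnorm k \<alpha> \<beta> x * f v) * indicator A (u_map k (x, v))
          = ennreal (C * f v) * (indicator A (u_map k (x, v)) * ennreal (Fgen k \<alpha> (eK k \<beta>) x))"
          by (simp add: mult_ac)
      qed
      also have "\<dots> = ennreal (C * f v) * (\<integral>\<^sup>+x. indicator A (u_map k (x, v)) * ennreal (Fgen k \<alpha> (eK k \<beta>) x) \<partial>lebk k)"
        by (rule nn_integral_cmult) (intro borel_measurable_times_ennreal measurable_compose[OF u_map_meas] hm measurable_compose[OF Fgen_meas measurable_ennreal])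
      also have "\<dots> = ennreal (C * f v) * (\<integral>\<^sup>+u. indicator A u * ennreal (\<Prod>j\<in>{1..k}. Gd v \<alpha> (ExP k \<alpha> (eK k \<beta>) j) j (u j)) \<partial>lebk k)"
        by (subst lemA[OF vpos hm]) (rule refl)
      also have "\<dots> = ennreal (C * f v) * (\<integral>\<^sup>+u. indicator A u * ennreal (Q u v) \<partial>lebk k)"
      proof -
        have QE: "(\<Prod>j\<in>{1..k}. Gd v \<alpha> (ExP k \<alpha> (eK k \<beta>) j) j (u j)) = Q u v" for u
          unfolding Q_def \<gamma>_def by (intro prod.cong refl) (simp only: ExP_gam)
        show ?thesis by (simp only: QE)
      qed
      also have "\<dots> = (\<integral>\<^sup>+u. ennreal (C * f v) * (indicator A u * ennreal (Q u v)) \<partial>lebk k)"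
        by (rule nn_integral_cmult[symmetric]) (intro borel_measurable_times_ennreal hm measurable_compose[OF _ measurable_ennreal]
           Qv)
      also have "\<dots> = (\<integral>\<^sup>+u. ennreal (C * f v * Q u v) * indicator A u \<partial>lebk k)"
      proof (intro nn_integral_cong)
        fix u
        have "ennreal (C * f v * Q u v) = ennreal (C * f v) * ennreal (Q u v)"
          by (rule ennreal_mult) (use Cf Qnn in auto)
        then show "ennreal (C * f v) * (indicator A u * ennreal (Q u v)) = ennreal (C * f v * Q u v) * indicator A u"
          by (simp add: mult_ac)
      qed
      finally show ?thesis .
    qed
    have "emeasure (distr (density (lebk k \<Otimes>\<^sub>M lebk k) (\<lambda>(x, v). ennreal (f1_dens k \<alpha> \<beta> x * f v))) (lebk k) (u_map k)) A
      = emeasure (density (lebk k \<Otimes>\<^sub>M lebk k) (\<lambda>(x, v). ennreal (f1_dens k \<alpha> \<beta> x * f v))) (u_map k -` A \<inter> space (lebk k \<Otimes>\<^sub>M lebk k))"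
      using u_map_meas2[of k] A by (subst emeasure_distr) simp_all
    also have "\<dots> = (\<integral>\<^sup>+p. (\<lambda>(x, v). ennreal (f1_dens k \<alpha> \<beta> x * f v)) p * indicator (u_map k -` A \<inter> space (lebk k \<Otimes>\<^sub>M lebk k)) p \<partial>(lebk k \<Otimes>\<^sub>M lebk k))"
      by (rule emeasure_density[OF Dm measurable_sets[OF u_map_meas2 A]])
    also have "\<dots> = (\<integral>\<^sup>+p. F p \<partial>(lebk k \<Otimes>\<^sub>M lebk k))"
      by (intro nn_integral_cong) (auto simp: F_def f1_dens_def C_def indicator_def split: prod.splits)
    also have "\<dots> = (\<integral>\<^sup>+v. \<integral>\<^sup>+x. F (x, v) \<partial>lebk k \<partial>lebk k)"
      by (rule PP.nn_integral_snd[OF Fm, symmetric])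
    also have "\<dots> = (\<integral>\<^sup>+v. \<integral>\<^sup>+u. ennreal (C * f v * Q u v) * indicator A u \<partial>lebk k \<partial>lebk k)"
      unfolding F_def fst_conv snd_conv by (intro nn_integral_cong inner)
    also have "\<dots> = (\<integral>\<^sup>+u. \<integral>\<^sup>+v. ennreal (C * f v * Q u v) * indicator A u \<partial>lebk k \<partial>lebk k)"
    proof (rule PP.Fubini')
      have "(\<lambda>p. ennreal (C * f (snd p) * Q (fst p) (snd p)) * indicator A (fst p)) \<in> borel_measurable (lebk k \<Otimes>\<^sub>M lebk k)"
        using Jm by (intro borel_measurable_times_ennreal measurable_compose[OF measurable_fst borel_measurable_indicator[OF A]])
          (simp add: split_beta')
      then show "(\<lambda>(u, v). ennreal (C * f v * Q u v) * indicator A u) \<in> borel_measurable (lebk k \<Otimes>\<^sub>M lebk k)"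
        by (simp add: split_beta')
    qed
    also have "\<dots> = (\<integral>\<^sup>+u. H u * indicator A u \<partial>lebk k)"
      unfolding H_def
    proof (intro nn_integral_cong)
      fix u assume u: "u \<in> space (lebk k)"
      have "(\<lambda>v. ennreal (C * f v * Q u v)) \<in> borel_measurable (lebk k)"
        using measurable_compose[OF measurable_Pair1'[OF u] Jm] by simp
      then show "(\<integral>\<^sup>+v. ennreal (C * f v * Q u v) * indicator A u \<partial>lebk k) = (\<integral>\<^sup>+v. ennreal (C * f v * Q u v) \<partial>lebk k) * indicator A u"
        by (rule nn_integral_multc)
    qed
    also have "\<dots> = emeasure (density (lebk k) H) A"
      by (rule emeasure_density[symmetric]) (use Hmeas A in auto)
    finally show "emeasure (distr (density (lebk k \<Otimes>\<^sub>M lebk k) (\<lambda>(x, v). ennreal (f1_dens k \<alpha> \<beta> x * f v))) (lebk k) (u_map k)) A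
      = emeasure (density (lebk k) H) A" .
  qed
  have AEg: "AE u in lebk k. ennreal (g u) = H u"
    by (rule P.density_unique) (use g_meas Hmeas g_dens dens in auto)
  show ?thesis unfolding \<gamma>_def[symmetric]
  proof (rule AE_mp[OF AEg], rule AE_I2, intro impI)
    fix u assume gH: "ennreal (g u) = H u" and up: "u \<in> pos_orthant k"
    define K where "K = (\<lambda>v. indicator {v. \<forall>j\<in>{1..k}. v j > u j} v * (\<Prod>j\<in>{1..k}. (v j - u j) powr (\<gamma> j - 1) * v j powr (- \<alpha> j - \<gamma> j)) * f v)"
    define Pu where "Pu = (\<Prod>j\<in>{1..k}. u j powr \<alpha> j)"
    have Pu0: "Pu \<ge> 0" unfolding Pu_def by (intro prod_nonneg) auto
    have Knn: "K v \<ge> 0" for v unfolding K_def using f_nonneg by (intro mult_nonneg_nonneg prod_nonneg) auto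
    have Km[measurable]: "K \<in> borel_measurable (lebk k)" unfolding K_def by (rule Kmeas[OF f_meas])
    have Qu: "Q u v = Pu * (indicator {v. \<forall>j\<in>{1..k}. v j > u j} v * (\<Prod>j\<in>{1..k}. (v j - u j) powr (\<gamma> j - 1) * v j powr (- \<alpha> j - \<gamma> j)))" for v
      unfolding Q_def Pu_def by (rule Q_kober[OF up])
    have "H u = (\<integral>\<^sup>+v. ennreal (C * Pu) * ennreal (K v) \<partial>lebk k)"
      unfolding H_def
    proof (intro nn_integral_cong)
      fix v
      have e: "C * f v * Q u v = (C * Pu) * K v" unfolding Qu K_def by (simp add: mult_ac)
      show "ennreal (C * f v * Q u v) = ennreal (C * Pu) * ennreal (K v)"
        unfolding e by (rule ennreal_mult) (use Cpos Pu0 Knn in auto)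
    qed
    also have "\<dots> = ennreal (C * Pu) * (\<integral>\<^sup>+v. ennreal (K v) \<partial>lebk k)"
      by (rule nn_integral_cmult) measurable
    finally have Hu: "H u = ennreal (C * Pu) * (\<integral>\<^sup>+v. ennreal (K v) \<partial>lebk k)" .
    have IK: "(\<integral>v. K v \<partial>lebk k) = enn2real (\<integral>\<^sup>+v. ennreal (K v) \<partial>lebk k)"
      by (rule integral_eq_nn_integral[OF Km]) (simp add: Knn)
    have gu: "g u = C * Pu * (\<integral>v. K v \<partial>lebk k)"
    proof -
      have "g u = enn2real (ennreal (g u))" using g_nonneg by simp
      also have "\<dots> = C * Pu * (\<integral>v. K v \<partial>lebk k)"
        unfolding gH Hu IK enn2real_mult using Cpos Pu0 by simp
      finally show ?thesis .
    qed
    have kob: "kober2 k \<alpha> \<gamma> f u = (\<Prod>j\<in>{1..k}. u j powr \<alpha> j / Gamma (\<gamma> j)) * (\<integral>v. K v \<partial>lebk k)"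
      unfolding kober2_def K_def ..
    have alg: "(\<Prod>j\<in>{1..k}. Gamma (\<alpha> j + 1) / Gamma (\<alpha> j + \<gamma> j + 1)) * C * Pu = (\<Prod>j\<in>{1..k}. u j powr \<alpha> j / Gamma (\<gamma> j))"
    proof -
      have "(\<Prod>j\<in>{1..k}. Gamma (\<alpha> j + 1) / Gamma (\<alpha> j + \<gamma> j + 1)) * C * Pu
         = (\<Prod>j\<in>{1..k}. Gamma (\<alpha> j + 1) / Gamma (\<alpha> j + \<gamma> j + 1) / Beta (\<alpha> j + 1) (\<gamma> j) * u j powr \<alpha> j)"
        unfolding Ceq B_def Pu_def by (simp add: prod_dividef prod.distrib)
      also have "\<dots> = (\<Prod>j\<in>{1..k}. u j powr \<alpha> j / Gamma (\<gamma> j))"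
      proof (intro prod.cong refl)
        fix j assume j: "j \<in> {1..k}"
        have a: "\<alpha> j + 1 > 0" "\<gamma> j > 0" using assms(2,3) j unfolding \<gamma>_def by force+
        have eq: "\<alpha> j + 1 + \<gamma> j = \<alpha> j + \<gamma> j + 1" by simp
        have Beq: "Beta (\<alpha> j + 1) (\<gamma> j) = Gamma (\<alpha> j + 1) * Gamma (\<gamma> j) / Gamma (\<alpha> j + \<gamma> j + 1)"
          unfolding Beta_def eq ..
        have gen: "\<And>G1 G2 G3 U::real. G1 \<noteq> 0 \<Longrightarrow> G2 \<noteq> 0 \<Longrightarrow> G3 \<noteq> 0 \<Longrightarrow> G1 / G2 / (G1 * G3 / G2) * U = U / G3"
          by (simp add: field_simps)
        have n1: "Gamma (\<alpha> j + 1) \<noteq> 0" using a by (intro less_imp_neq[symmetric] Gamma_real_pos) 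
        have n2: "Gamma (\<alpha> j + \<gamma> j + 1) \<noteq> 0" using a by (intro less_imp_neq[symmetric] Gamma_real_pos) simp
        have n3: "Gamma (\<gamma> j) \<noteq> 0" using a by (intro less_imp_neq[symmetric] Gamma_real_pos)
        show "Gamma (\<alpha> j + 1) / Gamma (\<alpha> j + \<gamma> j + 1) / Beta (\<alpha> j + 1) (\<gamma> j) * u j powr \<alpha> j = u j powr \<alpha> j / Gamma (\<gamma> j)"
          unfolding Beq by (rule gen[OF n1 n2 n3])
      qed
      finally show ?thesis .
    qed
    show "(\<Prod>j\<in>{1..k}. Gamma (\<alpha> j + 1) / Gamma (\<alpha> j + \<gamma> j + 1)) * g u = kober2 k \<alpha> \<gamma> f u"
      unfolding gu kob alg[symmetric] by (simp add: mult_ac)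
  qed
qed

end
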